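(* Let $A=KQ/I$ be a finite-dimensional gentle algebra, let $D$ be a string or a band for $A$, let $m=\ell(D)$ be its length and let $1\le k\le m$. Then $D\le_{\mathrm{deg}}D_{\hat k}$, i.e. $\mathcal{O}_{D_{\hat k}}\subseteq\overline{\mathcal{O}_{D}}$ in $\mathrm{mod}(A,\mathbf{d})$, where $\mathbf{d}$ is the dimension vector of $D$ (which equals that of $D_{\hat k}$).
   Context: Letters are arrows $\alpha\in Q_1$ (direct) and formal inverses $\alpha^{-1}$ (inverse). A string is a reduced walk $C=c_1\cdots c_m$ in $Q$ avoiding the relations of $I$ (and their inverses), with vertex positions $v_1,\dots,v_{m+1}$ ($c_t$ goes from $v_t$ to $v_{t+1}$); trivial strings $e_v$ have length $0$; a string is identified with its inverse. For $1\le i\le j\le m+1$, $C[i,j]$ denotes the substring $c_i\cdots c_{j-1}$ from $v_i$ to $v_j$ (trivial string $e_{v_i}$ if $i=j$), $C_{\le i}=C[1,i]$, $C_{\ge j}=C[j,m+1]$. A band is a closed walk $B=b_1\cdots b_m$ ($m\ge1$) all of whose powers are strings, up to rotation and inversion; $\ell(B)=m$. Deleting the $k$-th arrow: for a string $C$, $C_{\hat k}$ is the multi-set $\{C_{\le k},C_{\ge k+1}\}$; for a band $B=b_1\cdots b_m$ (with a chosen representative), $B_{\hat k}$ is the one-element multi-set consisting of the string $b_{k+1}\cdots b_m b_1\cdots b_{k-1}$. $M(C)$ is the string module (a copy of $K$ at each vertex position, arrows acting by identities along letters) and $M(B,\lambda,q)$ ($\lambda\in K^*$) the band module (a copy of $K^q$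 at each vertex position of the closed walk, identities along letters except one fixed letter acting by the Jordan block $J(\lambda,q)$). $\mathrm{mod}(A,\mathbf{d})$ is the affine variety of representations of $(Q,I)$ with dimension vector $\mathbf{d}$, Zariski topology, base change action of $\mathrm{GL}_{\mathbf{d}}$. For a multi-set of strings $C_i$ and pairwise distinct bands $B_j$ with multiplicities $q_j$, its family $\mathcal{O}$ is the union of the orbits of all modules $\bigoplus_i M(C_i)\oplus\bigoplus_j\bigoplus_k M(B_j,\lambda_{jk},q_{jk})$ with $(q_{jk})_k$ a partition of $q_j$, $\lambda_{jk}\in K^*$; $\mathcal{O}_D$ for a single string or band $D$ is the family of the one-element multi-set $\{D\}$. Standing assumption: $K$ is an algebraically closed field. *)

theory Defs
  imports "Jordan_Normal_Form.Jordan_Normal_Form" "HOL-Computational_Algebra.Polynomial"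
begin

text \<open>The ideal I of a gentle algebra is generated by paths of
length two; R is the set of such generating relations, a pair (al, be) in R meaning
that the path "first al, then be" (with t al = s be) lies in I.\<close>

definition is_path :: "('a \<Rightarrow> 'v) \<Rightarrow> ('a \<Rightarrow> 'v) \<Rightarrow> 'a list \<Rightarrow> bool" where
  "is_path s t p \<longleftrightarrow> p \<noteq> [] \<and> (\<forall>i. Suc i < length p \<longrightarrow> t (p!i) = s (p!Suc i))"

definition avoids_R :: "('a \<times> 'a) set \<Rightarrow> 'a list \<Rightarrow> bool" where
  "avoids_R R p \<longleftrightarrow> (\<forall>i. Suc i < length p \<longrightarrow> (p!i, p!Suc i) \<notin> R)"

definition gentle :: "('a::finite \<Rightarrow> 'v::finite) \<Rightarrow> ('a \<Rightarrow> 'v) \<Rightarrow> ('a \<times> 'a) set \<Rightarrow> bool" where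
  "gentle s t R \<longleftrightarrow>
     (\<forall>(al, be) \<in> R. t al = s be) \<and>
     (\<forall>v. card {al. s al = v} \<le> 2 \<and> card {al. t al = v} \<le> 2) \<and>
     (\<forall>be. card {al. t al = s be \<and> (al, be) \<in> R} \<le> 1 \<and>
           card {al. t al = s be \<and> (al, be) \<notin> R} \<le> 1) \<and>
     (\<forall>al. card {be. s be = t al \<and> (al, be) \<in> R} \<le> 1 \<and>
           card {be. s be = t al \<and> (al, be) \<notin> R} \<le> 1)"

text \<open>KQ/I is finite-dimensional iff there are only finitely many paths not in I.\<close>
definition fin_dim_alg :: "('a \<Rightarrow> 'v) \<Rightarrow> ('a \<Rightarrow> 'v) \<Rightarrow> ('a \<times> 'a) set \<Rightarrow> bool" where
  "fin_dim_alg s t R \<longleftrightarrow> finite {p. is_path s t p \<and> avoids_R R p}"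

definition alg_closed :: "'k::field itself \<Rightarrow> bool" where
  "alg_closed _ \<longleftrightarrow> (\<forall>p :: 'k poly. degree p > 0 \<longrightarrow> (\<exists>x. poly p x = 0))"

datatype 'a letter = Dir 'a | Inv 'a

fun lsrc :: "('a \<Rightarrow> 'v) \<Rightarrow> ('a \<Rightarrow> 'v) \<Rightarrow> 'a letter \<Rightarrow> 'v" where
  "lsrc s t (Dir a) = s a"
| "lsrc s t (Inv a) = t a"

fun ltgt :: "('a \<Rightarrow> 'v) \<Rightarrow> ('a \<Rightarrow> 'v) \<Rightarrow> 'a letter \<Rightarrow> 'v" where
  "ltgt s t (Dir a) = t a"
| "ltgt s t (Inv a) = s a"

fun linv :: "'a letter \<Rightarrow> 'a letter" where
  "linv (Dir a) = Inv a"
| "linv (Inv a) = Dir a"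

text \<open>A string is a pair (v0, cs): the walk cs starting at vertex v0 (v0 matters
only for the trivial string e_v0, i.e. cs = []).\<close>
definition is_string :: "('a \<Rightarrow> 'v) \<Rightarrow> ('a \<Rightarrow> 'v) \<Rightarrow> ('a \<times> 'a) set \<Rightarrow> 'v \<times> 'a letter list \<Rightarrow> bool" where
  "is_string s t R C \<longleftrightarrow> (case C of (v0, cs) \<Rightarrow>
     (cs \<noteq> [] \<longrightarrow> lsrc s t (hd cs) = v0) \<and>
     (\<forall>i. Suc i < length cs \<longrightarrow> ltgt s t (cs!i) = lsrc s t (cs!Suc i)) \<and>
     (\<forall>i. Suc i < length cs \<longrightarrow> cs!Suc i \<noteq> linv (cs!i)) \<and>
     (\<forall>i al be. Suc i < length cs \<longrightarrow>
        ((cs!i = Dir al \<and> cs!Suc i = Dir be) \<or> (cs!i = Inv be \<and> cs!Suc i = Inv al))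
        \<longrightarrow> (al, be) \<notin> R))"

definition is_band :: "('a \<Rightarrow> 'v) \<Rightarrow> ('a \<Rightarrow> 'v) \<Rightarrow> ('a \<times> 'a) set \<Rightarrow> 'a letter list \<Rightarrow> bool" where
  "is_band s t R cs \<longleftrightarrow> cs \<noteq> [] \<and> ltgt s t (last cs) = lsrc s t (hd cs) \<and>
     (\<forall>n\<ge>1. is_string s t R (lsrc s t (hd cs), concat (replicate n cs)))"

text \<open>Vertex at (0-based) position p of the string (v0, cs).\<close>
definition pos_vert :: "('a \<Rightarrow> 'v) \<Rightarrow> ('a \<Rightarrow> 'v) \<Rightarrow> 'v \<Rightarrow> 'a letter list \<Rightarrow> nat \<Rightarrow> 'v" where
  "pos_vert s t v0 cs p = (if p = 0 then v0 else ltgt s t (cs!(p - 1)))"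

text \<open>A piece is a string module M(C) (SP v0 cs) or a band module M(B, lam, q) (BP B lam q).
Basis of a piece: pairs (position, index in K^q).\<close>
datatype ('v, 'a, 'k) piece = SP 'v "'a letter list" | BP "'a letter list" 'k nat

fun pbasis :: "('v, 'a, 'k) piece \<Rightarrow> (nat \<times> nat) set" where
  "pbasis (SP v cs) = {(p, 0) | p. p \<le> length cs}"
| "pbasis (BP cs lam q) = {(p, j). p < length cs \<and> j < q}"

fun pvert :: "('a \<Rightarrow> 'v) \<Rightarrow> ('a \<Rightarrow> 'v) \<Rightarrow> ('v, 'a, 'k) piece \<Rightarrow> nat \<times> nat \<Rightarrow> 'v" where
  "pvert s t (SP v cs) (p, j) = pos_vert s t v cs p"
| "pvert s t (BP cs lam q) (p, j) = lsrc s t (cs!p)"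

text \<open>pcf s t P al b b' = coefficient of basis vector b' in (action of arrow al)(b).
For bands, the letter b_1 (index 0) acts by the Jordan block J(lam,q), all others by identity.\<close>
fun pcf :: "('a \<Rightarrow> 'v) \<Rightarrow> ('a \<Rightarrow> 'v) \<Rightarrow> ('v, 'a, 'k::field) piece \<Rightarrow> 'a \<Rightarrow> nat \<times> nat \<Rightarrow> nat \<times> nat \<Rightarrow> 'k" where
  "pcf s t (SP v cs) al (p, j) (p', j') =
     (\<Sum>i<length cs. (if cs!i = Dir al \<and> p = i \<and> p' = Suc i then 1 else 0)
                   + (if cs!i = Inv al \<and> p = Suc i \<and> p' = i then 1 else 0))"
| "pcf s t (BP cs lam q) al (p, j) (p', j') =
     (let m = length cs; M = (\<lambda>i. if i = 0 then jordan_block q lam else 1\<^sub>m q) in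
      (\<Sum>i<m. (if cs!i = Dir al \<and> p = i \<and> p' = Suc i mod m then M i $$ (j', j) else 0)
            + (if cs!i = Inv al \<and> p = Suc i mod m \<and> p' = i then M i $$ (j', j) else 0)))"

definition mbasis :: "('v, 'a, 'k) piece list \<Rightarrow> (nat \<times> nat \<times> nat) set" where
  "mbasis L = {(i, b). i < length L \<and> b \<in> pbasis (L!i)}"

definition mvert :: "('a \<Rightarrow> 'v) \<Rightarrow> ('a \<Rightarrow> 'v) \<Rightarrow> ('v, 'a, 'k) piece list \<Rightarrow> nat \<times> nat \<times> nat \<Rightarrow> 'v" where
  "mvert s t L y = (case y of (i, b) \<Rightarrow> pvert s t (L!i) b)"

definition mcf :: "('a \<Rightarrow> 'v) \<Rightarrow> ('a \<Rightarrow> 'v) \<Rightarrow> ('v, 'a, 'k::field) piece list \<Rightarrow> 'a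
                    \<Rightarrow> nat \<times> nat \<times> nat \<Rightarrow> nat \<times> nat \<times> nat \<Rightarrow> 'k" where
  "mcf s t L al y y' = (case y of (i, b) \<Rightarrow> case y' of (i', b') \<Rightarrow>
      if i = i' then pcf s t (L!i) al b b' else 0)"

definition dimvec :: "('a \<Rightarrow> 'v) \<Rightarrow> ('a \<Rightarrow> 'v) \<Rightarrow> ('v, 'a, 'k) piece list \<Rightarrow> 'v \<Rightarrow> nat" where
  "dimvec s t L v = card {y \<in> mbasis L. mvert s t L y = v}"

definition modvar :: "('a \<Rightarrow> 'v) \<Rightarrow> ('a \<Rightarrow> 'v) \<Rightarrow> ('a \<times> 'a) set \<Rightarrow> ('v \<Rightarrow> nat)
                     \<Rightarrow> ('a \<Rightarrow> 'k::field mat) set" where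
  "modvar s t R d = {x. (\<forall>al. x al \<in> carrier_mat (d (t al)) (d (s al))) \<and>
       (\<forall>(al, be) \<in> R. x be * x al = 0\<^sub>m (d (t be)) (d (s al)))}"

text \<open>x is the matrix representation of the direct sum of the pieces L with respect
to some ordering of its combinatorial basis.\<close>
definition realizes :: "('a \<Rightarrow> 'v) \<Rightarrow> ('a \<Rightarrow> 'v) \<Rightarrow> ('v \<Rightarrow> nat) \<Rightarrow> ('v, 'a, 'k::field) piece list
                        \<Rightarrow> ('a \<Rightarrow> 'k mat) \<Rightarrow> bool" where
  "realizes s t d L x \<longleftrightarrow> (\<forall>al. x al \<in> carrier_mat (d (t al)) (d (s al))) \<and>
     (\<exists>\<phi>. (\<forall>v. bij_betw \<phi> {y \<in> mbasis L. mvert s t L y = v} {..<d v}) \<and>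
          (\<forall>al y y'. y \<in> mbasis L \<longrightarrow> y' \<in> mbasis L \<longrightarrow> mvert s t L y = s al \<longrightarrow>
               mvert s t L y' = t al \<longrightarrow> x al $$ (\<phi> y', \<phi> y) = mcf s t L al y y'))"

definition is_GL :: "('v \<Rightarrow> nat) \<Rightarrow> ('v \<Rightarrow> 'k::field mat) \<Rightarrow> ('v \<Rightarrow> 'k mat) \<Rightarrow> bool" where
  "is_GL d g h \<longleftrightarrow> (\<forall>v. g v \<in> carrier_mat (d v) (d v) \<and> h v \<in> carrier_mat (d v) (d v) \<and>
       g v * h v = 1\<^sub>m (d v) \<and> h v * g v = 1\<^sub>m (d v))"

definition gl_act :: "('a \<Rightarrow> 'v) \<Rightarrow> ('a \<Rightarrow> 'v) \<Rightarrow> ('v \<Rightarrow> 'k::field mat) \<Rightarrow> ('v \<Rightarrow> 'k mat)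
                      \<Rightarrow> ('a \<Rightarrow> 'k mat) \<Rightarrow> ('a \<Rightarrow> 'k mat)" where
  "gl_act s t g h x = (\<lambda>al. g (t al) * x al * h (s al))"

definition module_orbit :: "('a \<Rightarrow> 'v) \<Rightarrow> ('a \<Rightarrow> 'v) \<Rightarrow> ('v \<Rightarrow> nat) \<Rightarrow> ('v, 'a, 'k::field) piece list
                            \<Rightarrow> ('a \<Rightarrow> 'k mat) set" where
  "module_orbit s t d L = {y. \<exists>g h x. is_GL d g h \<and> realizes s t d L x \<and> y = gl_act s t g h x}"

text \<open>Family of the multi-set of strings strs and bands B_j with multiplicities q_j:
union of orbits of sums of the M(C_i) and M(B_j, lam_jk, q_jk), (q_jk)_k a partition
of q_j, lam_jk nonzero.\<close>
definition family :: "('a \<Rightarrow> 'v) \<Rightarrow> ('a \<Rightarrow> 'v) \<Rightarrow> ('v \<Rightarrow> nat) \<Rightarrow> ('v \<times> 'a letter list) list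
                      \<Rightarrow> ('a letter list \<times> nat) list \<Rightarrow> ('a \<Rightarrow> 'k::field mat) set" where
  "family s t d strs bands = {y. \<exists>ps :: ('k \<times> nat) list list.
     length ps = length bands \<and>
     (\<forall>j < length bands. (\<Sum>(lam, q) \<leftarrow> ps!j. q) = snd (bands!j) \<and>
                         (\<forall>(lam, q) \<in> set (ps!j). lam \<noteq> 0 \<and> q > 0)) \<and>
     y \<in> module_orbit s t d
          (map (\<lambda>(v, cs). SP v cs) strs @
           concat (map (\<lambda>j. map (\<lambda>(lam, q). BP (fst (bands!j)) lam q) (ps!j)) [0..<length bands]))}"

inductive_set polyfun :: "('a \<Rightarrow> 'v) \<Rightarrow> ('a \<Rightarrow> 'v) \<Rightarrow> ('v \<Rightarrow> nat) \<Rightarrow> (('a \<Rightarrow> 'k::field mat) \<Rightarrow> 'k) set"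
  for s t d where
  pf_const: "(\<lambda>x. c) \<in> polyfun s t d"
| pf_coord: "i < d (t al) \<Longrightarrow> j < d (s al) \<Longrightarrow> (\<lambda>x. x al $$ (i, j)) \<in> polyfun s t d"
| pf_add: "f \<in> polyfun s t d \<Longrightarrow> g \<in> polyfun s t d \<Longrightarrow> (\<lambda>x. f x + g x) \<in> polyfun s t d"
| pf_mult: "f \<in> polyfun s t d \<Longrightarrow> g \<in> polyfun s t d \<Longrightarrow> (\<lambda>x. f x * g x) \<in> polyfun s t d"

definition zariski_closure :: "('a \<Rightarrow> 'v) \<Rightarrow> ('a \<Rightarrow> 'v) \<Rightarrow> ('a \<times> 'a) set \<Rightarrow> ('v \<Rightarrow> nat)
                               \<Rightarrow> ('a \<Rightarrow> 'k::field mat) set \<Rightarrow> ('a \<Rightarrow> 'k mat) set" where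
  "zariski_closure s t R d S = {x \<in> modvar s t R d.
      \<forall>f \<in> polyfun s t d. (\<forall>y \<in> S. f y = 0) \<longrightarrow> f x = 0}"

datatype ('v, 'a) strband = Str 'v "'a letter list" | Band "'a letter list"

fun is_strband :: "('a \<Rightarrow> 'v) \<Rightarrow> ('a \<Rightarrow> 'v) \<Rightarrow> ('a \<times> 'a) set \<Rightarrow> ('v, 'a) strband \<Rightarrow> bool" where
  "is_strband s t R (Str v cs) = is_string s t R (v, cs)"
| "is_strband s t R (Band cs) = is_band s t R cs"

fun sb_len :: "('v, 'a) strband \<Rightarrow> nat" where
  "sb_len (Str v cs) = length cs"
| "sb_len (Band cs) = length cs"

text \<open>Dimension vector of D (for a band: of M(D, lam, 1), independent of lam).\<close>
fun sb_dimvec :: "('a \<Rightarrow> 'v) \<Rightarrow> ('a \<Rightarrow> 'v) \<Rightarrow> ('v, 'a) strband \<Rightarrow> 'v \<Rightarrow> nat" where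
  "sb_dimvec s t (Str v cs) = dimvec s t [SP v cs :: ('v, 'a, nat) piece]"
| "sb_dimvec s t (Band cs) = dimvec s t [BP cs (1::nat) 1]"

fun sb_family :: "('a \<Rightarrow> 'v) \<Rightarrow> ('a \<Rightarrow> 'v) \<Rightarrow> ('v \<Rightarrow> nat) \<Rightarrow> ('v, 'a) strband
                  \<Rightarrow> ('a \<Rightarrow> 'k::field mat) set" where
  "sb_family s t d (Str v cs) = family s t d [(v, cs)] []"
| "sb_family s t d (Band cs) = family s t d [] [(cs, 1)]"

text \<open>D with the k-th arrow deleted (k is 1-based): a multi-set of strings.
For a string C: C_{<=k} = c_1..c_{k-1} from v_1, C_{>=k+1} = c_{k+1}..c_m from v_{k+1}.
For a band: b_{k+1}..b_m b_1..b_{k-1}, starting at the target of b_k.\<close>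
fun sb_hat :: "('a \<Rightarrow> 'v) \<Rightarrow> ('a \<Rightarrow> 'v) \<Rightarrow> ('v, 'a) strband \<Rightarrow> nat \<Rightarrow> ('v \<times> 'a letter list) list" where
  "sb_hat s t (Str v cs) k = [(v, take (k - 1) cs), (ltgt s t (cs!(k - 1)), drop k cs)]"
| "sb_hat s t (Band cs) k = [(ltgt s t (cs!(k - 1)), drop k cs @ take (k - 1) cs)]"

end

theory Submission
  imports Defs
begin


lemma sum_delta_cond:
  "(\<Sum>i<(m::nat). if P i \<and> p = i then c i else (0::'k::comm_monoid_add)) = (if p < m \<and> P p then c p else 0)"
proof -
  have "(\<Sum>i<(m::nat). if P i \<and> p = i then c i else (0::'k)) = (\<Sum>i<m. if p = i then (if P i then c i else 0) else 0)"
    by (rule sum.cong) auto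
  also have "\<dots> = (if p < m \<and> P p then c p else 0)" by (subst sum.delta'[OF finite_lessThan]) auto
  finally show ?thesis .
qed

definition cfw :: "(nat \<Rightarrow> nat) \<Rightarrow> nat \<Rightarrow> 'a letter list \<Rightarrow> (nat \<Rightarrow> 'k::field) \<Rightarrow> 'a \<Rightarrow> nat \<Rightarrow> nat \<Rightarrow> 'k" where
  "cfw nx m cs w al p p' = (if p < m \<and> p' = nx p \<and> cs!p = Dir al then w p else 0)
     + (if p' < m \<and> p = nx p' \<and> cs!p' = Inv al then w p' else 0)"

lemma pcf_SP: "pcf s t (SP v cs) al (p, j) (p', j') = (cfw Suc (length cs) cs (\<lambda>_. 1) al p p' :: 'k::field)"
proof -
  have 1: "(\<Sum>i<length cs. (if cs!i = Dir al \<and> p = i \<and> p' = Suc i then 1 else (0::'k)))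
     = (if p < length cs \<and> p' = Suc p \<and> cs!p = Dir al then 1 else 0)"
    using sum_delta_cond[where m="length cs" and P="\<lambda>i. cs!i = Dir al \<and> p' = Suc i" and p=p and c="\<lambda>_. (1::'k)"]
    by (smt (verit) sum.cong)
  have 2: "(\<Sum>i<length cs. (if cs!i = Inv al \<and> p = Suc i \<and> p' = i then 1 else (0::'k)))
     = (if p' < length cs \<and> p = Suc p' \<and> cs!p' = Inv al then 1 else 0)"
    using sum_delta_cond[where m="length cs" and P="\<lambda>i. cs!i = Inv al \<and> p = Suc i" and p=p' and c="\<lambda>_. (1::'k)"]
    by (smt (verit) sum.cong)
  show ?thesis by (simp add: sum.distrib 1 2 cfw_def)
qed

lemma pcf_BP: "pcf s t (BP cs mu 1) al (p, 0) (p', 0) =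
   (cfw (\<lambda>i. Suc i mod length cs) (length cs) cs (\<lambda>i. if i = 0 then mu else 1) al p p' :: 'k::field)"
proof -
  let ?m = "length cs"
  let ?w = "\<lambda>i. if i = 0 then mu else (1::'k)"
  have M: "(if i = 0 then jordan_block 1 mu else 1\<^sub>m 1) $$ (0, 0) = ?w i" for i
    by (simp add: jordan_block_def)
  have 1: "(\<Sum>i<?m. (if cs!i = Dir al \<and> p = i \<and> p' = Suc i mod ?m then ?w i else (0::'k)))
     = (if p < ?m \<and> p' = Suc p mod ?m \<and> cs!p = Dir al then ?w p else 0)"
    using sum_delta_cond[where m="?m" and P="\<lambda>i. cs!i = Dir al \<and> p' = Suc i mod ?m" and p=p and c="?w"]
    by (smt (verit) sum.cong)
  have 2: "(\<Sum>i<?m. (if cs!i = Inv al \<and> p = Suc i mod ?m \<and> p' = i then ?w i else (0::'k)))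
     = (if p' < ?m \<and> p = Suc p' mod ?m \<and> cs!p' = Inv al then ?w p' else 0)"
    using sum_delta_cond[where m="?m" and P="\<lambda>i. cs!i = Inv al \<and> p = Suc i mod ?m" and p=p' and c="?w"]
    by (smt (verit) sum.cong)
  show ?thesis by (simp only: pcf.simps Let_def M sum.distrib 1 2 cfw_def)
qed

lemma polyfun_affine:
  assumes "f \<in> polyfun s t d"
    and "\<forall>lam al i j. i < d (t al) \<longrightarrow> j < d (s al) \<longrightarrow> X lam al $$ (i,j) = A al i j + lam * B al i j"
  shows "\<exists>p. \<forall>lam. f (X lam) = poly p (lam :: 'k::field)"
  using assms(1)
proof induct
  case (pf_const c)
  then show ?case by (intro exI[of _ "[:c:]"]) simp
next
  case (pf_coord i al j)
  then show ?case using assms(2) by (intro exI[of _ "[:A al i j, B al i j:]"]) simp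
next
  case (pf_add f g)
  then obtain p q where "\<forall>lam. f (X lam) = poly p lam" "\<forall>lam. g (X lam) = poly q lam" by blast
  then show ?case by (intro exI[of _ "p + q"]) simp
next
  case (pf_mult f g)
  then obtain p q where "\<forall>lam. f (X lam) = poly p lam" "\<forall>lam. g (X lam) = poly q lam" by blast
  then show ?case by (intro exI[of _ "p * q"]) simp
qed

lemma alg_closed_infinite:
  assumes "alg_closed TYPE('k::field)"
  shows "infinite (UNIV :: 'k set)"
proof
  assume fin: "finite (UNIV :: 'k set)"
  define q :: "'k poly" where "q = (\<Prod>a\<in>UNIV. [:-a, 1:])"
  have dq: "degree q = card (UNIV :: 'k set)"
    unfolding q_def by (subst degree_prod_eq_sum_degree) (auto simp: fin)
  have "card (UNIV :: 'k set) \<ge> 2"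
  proof -
    have "{0, 1} \<subseteq> (UNIV :: 'k set)" by simp
    from card_mono[OF fin this] show ?thesis by simp
  qed
  hence "degree (q + 1) > 0" using dq by (simp add: degree_add_eq_left)
  with assms obtain x where "poly (q + 1) x = 0" unfolding alg_closed_def by blast
  moreover have "poly q x = 0" unfolding q_def poly_prod
    by (rule prod_zero) (auto simp: fin)
  ultimately show False by simp
qed

lemma vanish_at_0:
  assumes "infinite (UNIV :: 'k::field set)" and "\<forall>lam. lam \<noteq> 0 \<longrightarrow> poly p (lam::'k) = 0"
  shows "poly p 0 = 0"
proof (cases "p = 0")
  case False
  from poly_roots_finite[OF False] have "finite {x. poly p x = 0}" .
  moreover have "UNIV - {0} \<subseteq> {x. poly p x = 0}" using assms(2) by auto
  ultimately have "finite (UNIV - {0::'k})" by (rule finite_subset[rotated])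
  with assms(1) show ?thesis by simp
qed simp


definition bijrep :: "('v \<Rightarrow> nat) \<Rightarrow> nat set \<Rightarrow> (nat \<Rightarrow> 'v) \<Rightarrow> (nat \<Rightarrow> nat) \<Rightarrow> bool" where
  "bijrep d P vtx Phi \<longleftrightarrow> (\<forall>v. bij_betw Phi {p\<in>P. vtx p = v} {..<d v})"

definition coordrep :: "('a \<Rightarrow> 'v) \<Rightarrow> ('a \<Rightarrow> 'v) \<Rightarrow> ('v \<Rightarrow> nat) \<Rightarrow> nat set \<Rightarrow> (nat \<Rightarrow> 'v) \<Rightarrow> (nat \<Rightarrow> nat)
   \<Rightarrow> ('a \<Rightarrow> 'k::field mat) \<Rightarrow> ('a \<Rightarrow> nat \<Rightarrow> nat \<Rightarrow> 'k) \<Rightarrow> bool" where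
  "coordrep s t d P vtx Phi x cf \<longleftrightarrow> (\<forall>al. x al \<in> carrier_mat (d (t al)) (d (s al))) \<and>
     (\<forall>al p p'. p \<in> P \<longrightarrow> p' \<in> P \<longrightarrow> vtx p = s al \<longrightarrow> vtx p' = t al \<longrightarrow> x al $$ (Phi p', Phi p) = cf al p p')"

lemma bijrep_surj:
  assumes "bijrep d P vtx Phi" "i < d v"
  obtains p where "p \<in> P" "vtx p = v" "Phi p = i"
proof -
  from assms have "i \<in> Phi ` {p\<in>P. vtx p = v}" unfolding bijrep_def bij_betw_def by auto
  then show ?thesis using that by auto
qed

lemma bijrep_range:
  assumes "bijrep d P vtx Phi" "p \<in> P"
  shows "Phi p < d (vtx p)"
  using assms unfolding bijrep_def bij_betw_def by auto

lemma bijrep_inv: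
  assumes "bijrep d P vtx Phi" "p \<in> P" "vtx p = v"
  shows "inv_into {p\<in>P. vtx p = v} Phi (Phi p) = p"
  using assms unfolding bijrep_def bij_betw_def by (auto intro: inv_into_f_f)

lemma bijrep_inv_mem:
  assumes "bijrep d P vtx Phi" "i < d v"
  shows "inv_into {p\<in>P. vtx p = v} Phi i \<in> P" "vtx (inv_into {p\<in>P. vtx p = v} Phi i) = v"
    "Phi (inv_into {p\<in>P. vtx p = v} Phi i) = i"
proof -
  obtain p where "p \<in> P" "vtx p = v" "Phi p = i" using bijrep_surj[OF assms] .
  then show "inv_into {p\<in>P. vtx p = v} Phi i \<in> P" "vtx (inv_into {p\<in>P. vtx p = v} Phi i) = v"
    "Phi (inv_into {p\<in>P. vtx p = v} Phi i) = i"
    using bijrep_inv[OF assms(1)] by auto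
qed

lemma relations_hold:
  fixes x :: "'a \<Rightarrow> 'k::field mat"
  assumes br: "bijrep d P vtx Phi" and cr: "coordrep s t d P vtx Phi x cf"
    and st: "t al = s be"
    and z: "\<And>p p' p''. cf be p' p'' * cf al p p' = 0"
  shows "x be * x al = 0\<^sub>m (d (t be)) (d (s al))"
proof -
  have cb: "x be \<in> carrier_mat (d (t be)) (d (s be))" and ca: "x al \<in> carrier_mat (d (t al)) (d (s al))"
    using cr unfolding coordrep_def by auto
  show ?thesis
  proof (rule eq_matI)
    fix i j assume i: "i < dim_row (0\<^sub>m (d (t be)) (d (s al)) :: 'k mat)" and j: "j < dim_col (0\<^sub>m (d (t be)) (d (s al)) :: 'k mat)"
    hence i': "i < d (t be)" and j': "j < d (s al)" by auto
    obtain p'' where p'': "p'' \<in> P" "vtx p'' = t be" "Phi p'' = i" using bijrep_surj[OF br i'] .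
    obtain p where p: "p \<in> P" "vtx p = s al" "Phi p = j" using bijrep_surj[OF br j'] .
    have "(x be * x al) $$ (i, j) = (\<Sum>l \<in> {0..<d (t al)}. x be $$ (i, l) * x al $$ (l, j))"
      using cb ca i' j' st by (simp add: scalar_prod_def)
    also have "\<dots> = 0"
    proof (rule sum.neutral, rule ballI)
      fix l assume "l \<in> {0..<d (t al)}"
      then obtain p' where p': "p' \<in> P" "vtx p' = t al" "Phi p' = l" using bijrep_surj[OF br] by auto
      have "x be $$ (i, l) = cf be p' p''" using cr p' p'' st unfolding coordrep_def by auto
      moreover have "x al $$ (l, j) = cf al p p'" using cr p' p unfolding coordrep_def by auto
      ultimately show "x be $$ (i, l) * x al $$ (l, j) = 0" using z by simp
    qed
    finally show "(x be * x al) $$ (i, j) = 0\<^sub>m (d (t be)) (d (s al)) $$ (i, j)" using i' j' by simp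
  qed (use cb ca in auto)
qed

lemma gl_rel:
  fixes x :: "'a \<Rightarrow> 'k::field mat"
  assumes gl: "is_GL d g h"
    and cb: "x be \<in> carrier_mat (d (t be)) (d (s be))" and ca: "x al \<in> carrier_mat (d (t al)) (d (s al))"
    and st: "t al = s be" and z: "x be * x al = 0\<^sub>m (d (t be)) (d (s al))"
  shows "gl_act s t g h x be * gl_act s t g h x al = 0\<^sub>m (d (t be)) (d (s al))"
proof -
  have g: "\<And>v. g v \<in> carrier_mat (d v) (d v)" and h: "\<And>v. h v \<in> carrier_mat (d v) (d v)"
    and hg: "\<And>v. h v * g v = 1\<^sub>m (d v)" using gl unfolding is_GL_def by auto
  define G B H G2 A H2 where "G = g (t be)" "B = x be" "H = h (s be)" "G2 = g (s be)" "A = x al" "H2 = h (s al)"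
  have cG: "G \<in> carrier_mat (d (t be)) (d (t be))" "H \<in> carrier_mat (d (s be)) (d (s be))"
    "G2 \<in> carrier_mat (d (s be)) (d (s be))" "H2 \<in> carrier_mat (d (s al)) (d (s al))"
    "B \<in> carrier_mat (d (t be)) (d (s be))" "A \<in> carrier_mat (d (s be)) (d (s al))"
    using g h cb ca st by (auto simp: G_B_H_G2_A_H2_def)
  have HG: "H * G2 = 1\<^sub>m (d (s be))" using hg by (simp add: G_B_H_G2_A_H2_def)
  have e1: "H * (G2 * A * H2) = A * H2"
  proof -
    have "H * (G2 * A * H2) = H * (G2 * (A * H2))" using cG by simp
    also have "\<dots> = (H * G2) * (A * H2)" using cG by (subst assoc_mult_mat) auto
    also have "\<dots> = A * H2" using HG cG by simp
    finally show ?thesis .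
  qed
  have "gl_act s t g h x be * gl_act s t g h x al = G * B * H * (G2 * A * H2)"
    unfolding gl_act_def G_B_H_G2_A_H2_def using st by simp
  also have "\<dots> = (G * B) * (H * (G2 * A * H2))" using cG by (subst assoc_mult_mat) auto
  also have "\<dots> = (G * B) * (A * H2)" using e1 by simp
  also have "\<dots> = ((G * B) * A) * H2"
    using assoc_mult_mat[of "G * B" "d (t be)" "d (s be)" A "d (s al)" H2 "d (s al)"] cG by auto
  also have "\<dots> = G * (B * A) * H2"
    using assoc_mult_mat[of G "d (t be)" "d (t be)" B "d (s be)" A "d (s al)"] cG by auto
  also have "\<dots> = 0\<^sub>m (d (t be)) (d (s al))" using z cG st by (simp add: G_B_H_G2_A_H2_def)
  finally show ?thesis .
qed


lemma mat_assoc4: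
  fixes A :: "'k::field mat"
  assumes "A \<in> carrier_mat n1 n2" "B \<in> carrier_mat n2 n3" "C \<in> carrier_mat n3 n4" "D \<in> carrier_mat n4 n5"
    "E \<in> carrier_mat n5 n6"
  shows "A * (B * C * D) * E = (A * B) * C * (D * E)"
proof -
  have "A * (B * C * D) * E = A * ((B * C * D) * E)" using assms by (subst assoc_mult_mat) auto
  also have "(B * C * D) * E = (B * C) * (D * E)" using assms by (subst assoc_mult_mat) auto
  also have "A * ((B * C) * (D * E)) = (A * (B * C)) * (D * E)" using assms by (subst assoc_mult_mat) auto
  also have "A * (B * C) = (A * B) * C" using assms by (subst assoc_mult_mat) auto
  finally show ?thesis .
qed

lemma is_GL_mult:
  assumes "is_GL d g h" "is_GL d g' h'"
  shows "is_GL d (\<lambda>v. g v * g' v) (\<lambda>v. h' v * h v)"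
  unfolding is_GL_def
proof (intro allI conjI)
  fix v
  have c: "g v \<in> carrier_mat (d v) (d v)" "h v \<in> carrier_mat (d v) (d v)"
    "g' v \<in> carrier_mat (d v) (d v)" "h' v \<in> carrier_mat (d v) (d v)"
    and e: "g v * h v = 1\<^sub>m (d v)" "h v * g v = 1\<^sub>m (d v)" "g' v * h' v = 1\<^sub>m (d v)" "h' v * g' v = 1\<^sub>m (d v)"
    using assms unfolding is_GL_def by auto
  show "g v * g' v \<in> carrier_mat (d v) (d v)" "h' v * h v \<in> carrier_mat (d v) (d v)" using c by auto
  have "g v * g' v * (h' v * h v) = g v * (g' v * (h' v * h v))" using c by (subst assoc_mult_mat) auto
  also have "g' v * (h' v * h v) = (g' v * h' v) * h v" using c by (subst assoc_mult_mat) auto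
  finally show "g v * g' v * (h' v * h v) = 1\<^sub>m (d v)" using e c by simp
  have "h' v * h v * (g v * g' v) = h' v * (h v * (g v * g' v))" using c by (subst assoc_mult_mat) auto
  also have "h v * (g v * g' v) = (h v * g v) * g' v" using c by (subst assoc_mult_mat) auto
  finally show "h' v * h v * (g v * g' v) = 1\<^sub>m (d v)" using e c by simp
qed

lemma gl_act_compose:
  fixes x :: "'a \<Rightarrow> 'k::field mat"
  assumes "is_GL d g h" "is_GL d g' h'" "\<And>al. x al \<in> carrier_mat (d (t al)) (d (s al))"
  shows "gl_act s t g h (gl_act s t g' h' x) = gl_act s t (\<lambda>v. g v * g' v) (\<lambda>v. h' v * h v) x"
proof
  fix al
  have c: "\<And>v. g v \<in> carrier_mat (d v) (d v)" "\<And>v. h v \<in> carrier_mat (d v) (d v)"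
    "\<And>v. g' v \<in> carrier_mat (d v) (d v)" "\<And>v. h' v \<in> carrier_mat (d v) (d v)"
    using assms unfolding is_GL_def by auto
  show "gl_act s t g h (gl_act s t g' h' x) al = gl_act s t (\<lambda>v. g v * g' v) (\<lambda>v. h' v * h v) x al"
    unfolding gl_act_def by (rule mat_assoc4[OF c(1) c(3) assms(3) c(4) c(2)])
qed


lemma degen_core:
  fixes x0 :: "'a \<Rightarrow> 'k::field mat"
  assumes br: "bijrep d P vtx Phi"
    and cr0: "coordrep s t d P vtx Phi x0 cf0"
    and gl: "is_GL d g h"
    and inf: "infinite (UNIV :: 'k set)"
    and f: "f \<in> polyfun s t d"
    and van: "\<forall>y\<in>Fam. f y = 0"
    and fam: "\<And>lam x. lam \<noteq> 0 \<Longrightarrow> coordrep s t d P vtx Phi x (\<lambda>al p p'. cf0 al p p' + lam * cf1 al p p')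
                \<Longrightarrow> gl_act s t g h x \<in> Fam"
  shows "f (gl_act s t g h x0) = 0"
proof -
  define Pi where "Pi v = inv_into {p\<in>P. vtx p = v} Phi" for v
  define E where "E al = mat (d (t al)) (d (s al)) (\<lambda>(i,j). cf1 al (Pi (s al) j) (Pi (t al) i))" for al
  define xl where "xl lam al = x0 al + lam \<cdot>\<^sub>m E al" for lam al
  have cx0: "\<And>al. x0 al \<in> carrier_mat (d (t al)) (d (s al))" using cr0 unfolding coordrep_def by auto
  have cE: "\<And>al. E al \<in> carrier_mat (d (t al)) (d (s al))" unfolding E_def by auto
  have gc: "\<And>v. g v \<in> carrier_mat (d v) (d v)" "\<And>v. h v \<in> carrier_mat (d v) (d v)"
    using gl unfolding is_GL_def by auto
  have crl: "coordrep s t d P vtx Phi (xl lam) (\<lambda>al p p'. cf0 al p p' + lam * cf1 al p p')" for lam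
    unfolding coordrep_def
  proof (intro conjI allI impI)
    fix al show "xl lam al \<in> carrier_mat (d (t al)) (d (s al))" unfolding xl_def using cx0 cE by auto
  next
    fix al p p' assume pp: "p \<in> P" "p' \<in> P" "vtx p = s al" "vtx p' = t al"
    have r: "Phi p < d (s al)" "Phi p' < d (t al)" using bijrep_range[OF br] pp by force+
    have "E al $$ (Phi p', Phi p) = cf1 al p p'"
      unfolding E_def Pi_def using r bijrep_inv[OF br] pp by simp
    moreover have "x0 al $$ (Phi p', Phi p) = cf0 al p p'" using cr0 pp unfolding coordrep_def by auto
    ultimately show "xl lam al $$ (Phi p', Phi p) = cf0 al p p' + lam * cf1 al p p'"
      unfolding xl_def using r by (simp add: E_def)
  qed
  have X: "\<forall>lam al i j. i < d (t al) \<longrightarrow> j < d (s al) \<longrightarrow>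
     gl_act s t g h (xl lam) al $$ (i,j) = (g (t al) * x0 al * h (s al)) $$ (i,j) + lam * (g (t al) * E al * h (s al)) $$ (i,j)"
  proof (intro allI impI)
    fix lam al i j assume ij: "i < d (t al)" "j < d (s al)"
    have "gl_act s t g h (xl lam) al = g (t al) * x0 al * h (s al) + lam \<cdot>\<^sub>m (g (t al) * E al * h (s al))"
    proof -
      have gx: "g (t al) * x0 al \<in> carrier_mat (d (t al)) (d (s al))" "g (t al) * E al \<in> carrier_mat (d (t al)) (d (s al))"
        using mult_carrier_mat[OF gc(1) cx0] mult_carrier_mat[OF gc(1) cE] by auto
      have "g (t al) * (x0 al + lam \<cdot>\<^sub>m E al) = g (t al) * x0 al + g (t al) * (lam \<cdot>\<^sub>m E al)"
        using gc cx0 cE by (subst mult_add_distrib_mat[where nr="d (t al)" and n="d (t al)" and nc="d (s al)"]) auto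
      also have "g (t al) * (lam \<cdot>\<^sub>m E al) = lam \<cdot>\<^sub>m (g (t al) * E al)"
        using gc cE by (subst mult_smult_distrib[where nr="d (t al)" and n="d (t al)" and nc="d (s al)"]) auto
      finally have "g (t al) * (x0 al + lam \<cdot>\<^sub>m E al) * h (s al) = (g (t al) * x0 al + lam \<cdot>\<^sub>m (g (t al) * E al)) * h (s al)"
        by simp
      also have "\<dots> = g (t al) * x0 al * h (s al) + (lam \<cdot>\<^sub>m (g (t al) * E al)) * h (s al)"
        using gc cx0 cE gx by (subst add_mult_distrib_mat[where nr="d (t al)" and n="d (s al)" and nc="d (s al)"]) auto
      also have "(lam \<cdot>\<^sub>m (g (t al) * E al)) * h (s al) = lam \<cdot>\<^sub>m (g (t al) * E al * h (s al))"
        using gc cE gx by (subst mult_smult_assoc_mat[where nr="d (t al)" and n="d (s al)" and nc="d (s al)"]) auto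
      finally show ?thesis unfolding gl_act_def xl_def .
    qed
    then show "gl_act s t g h (xl lam) al $$ (i,j) = (g (t al) * x0 al * h (s al)) $$ (i,j) + lam * (g (t al) * E al * h (s al)) $$ (i,j)"
      using ij carrier_matD[OF gc(1)[of "t al"]] carrier_matD[OF gc(2)[of "s al"]] by simp
  qed
  obtain p where p: "\<forall>lam. f (gl_act s t g h (xl lam)) = poly p lam"
    using polyfun_affine[OF f X] by blast
  have "\<forall>lam. lam \<noteq> 0 \<longrightarrow> poly p lam = 0"
  proof (intro allI impI)
    fix lam :: 'k assume "lam \<noteq> 0"
    from fam[OF this crl] van have "f (gl_act s t g h (xl lam)) = 0" by auto
    with p show "poly p lam = 0" by simp
  qed
  from vanish_at_0[OF inf this] p have "f (gl_act s t g h (xl 0)) = 0" by simp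
  moreover have "xl 0 = x0"
  proof
    fix al show "xl 0 al = x0 al" unfolding xl_def using carrier_matD[OF cx0[of al]] by (intro eq_matI) (auto simp: E_def)
  qed
  ultimately show ?thesis by simp
qed


definition dmat :: "nat \<Rightarrow> (nat \<Rightarrow> 'k::field) \<Rightarrow> 'k mat" where
  "dmat n a = mat n n (\<lambda>(i,j). if i = j then a i else 0)"

lemma dmat_carrier[simp]: "dmat n a \<in> carrier_mat n n" by (simp add: dmat_def)

lemma dmat_left:
  assumes "A \<in> carrier_mat n m" "i < n" "j < m"
  shows "(dmat n a * A) $$ (i,j) = a i * A $$ (i,j)"
proof -
  have "(dmat n a * A) $$ (i,j) = (\<Sum>l\<in>{0..<n}. (if i = l then a i else 0) * A $$ (l,j))"
    using assms by (simp add: scalar_prod_def dmat_def)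
  also have "\<dots> = (\<Sum>l\<in>{0..<n}. if i = l then a i * A $$ (l,j) else 0)" by (rule sum.cong) auto
  also have "\<dots> = a i * A $$ (i,j)" using assms by simp
  finally show ?thesis .
qed

lemma dmat_right:
  assumes "A \<in> carrier_mat n m" "i < n" "j < m"
  shows "(A * dmat m b) $$ (i,j) = A $$ (i,j) * b j"
proof -
  have "(A * dmat m b) $$ (i,j) = (\<Sum>l\<in>{0..<m}. A $$ (i,l) * (if l = j then b l else 0))"
    using assms by (simp add: scalar_prod_def dmat_def)
  also have "\<dots> = (\<Sum>l\<in>{0..<m}. if j = l then A $$ (i,l) * b j else 0)" by (rule sum.cong) auto
  also have "\<dots> = A $$ (i,j) * b j" using assms by simp
  finally show ?thesis .
qed

lemma dmat_mult: "dmat n a * dmat n b = dmat n (\<lambda>i. a i * b i)"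
proof (rule eq_matI)
  fix i j assume "i < dim_row (dmat n (\<lambda>i. a i * b i))" "j < dim_col (dmat n (\<lambda>i. a i * b i))"
  hence ij: "i < n" "j < n" by (auto simp: dmat_def)
  show "(dmat n a * dmat n b) $$ (i, j) = dmat n (\<lambda>i. a i * b i) $$ (i, j)"
    unfolding dmat_left[OF dmat_carrier ij] using ij by (simp add: dmat_def)
qed (auto simp: dmat_def)

lemma scale_to_orbit:
  fixes x :: "'a \<Rightarrow> 'k::field mat"
  assumes br: "bijrep d P vtx Phi"
    and cr: "coordrep s t d P vtx Phi x cf"
    and e: "\<forall>p\<in>P. e p \<noteq> 0"
    and gl: "is_GL d g h"
    and real: "\<And>x1. coordrep s t d P vtx Phi x1 (\<lambda>al p p'. cf al p p' * e p / e p') \<Longrightarrow> realizes s t d L x1"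
  shows "gl_act s t g h x \<in> module_orbit s t d L"
proof -
  define Pi where "Pi v = inv_into {p\<in>P. vtx p = v} Phi" for v
  define cm where "cm v = dmat (d v) (\<lambda>i. e (Pi v i))" for v
  define cm' where "cm' v = dmat (d v) (\<lambda>i. 1 / e (Pi v i))" for v
  have cx: "\<And>al. x al \<in> carrier_mat (d (t al)) (d (s al))" using cr unfolding coordrep_def by auto
  have glc: "is_GL d cm cm'" unfolding is_GL_def
  proof (intro allI conjI)
    fix v
    have nz: "e (Pi v i) \<noteq> 0" if "i < d v" for i
      using bijrep_inv_mem[OF br that] e unfolding Pi_def by auto
    show "cm v \<in> carrier_mat (d v) (d v)" "cm' v \<in> carrier_mat (d v) (d v)" by (auto simp: cm_def cm'_def)
    show "cm v * cm' v = 1\<^sub>m (d v)" "cm' v * cm v = 1\<^sub>m (d v)"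
      unfolding cm_def cm'_def dmat_mult by (auto simp: dmat_def nz intro!: eq_matI)
  qed
  have glc': "is_GL d cm' cm" using glc unfolding is_GL_def by auto
  define x1 where "x1 = gl_act s t cm' cm x"
  have cr1: "coordrep s t d P vtx Phi x1 (\<lambda>al p p'. cf al p p' * e p / e p')"
    unfolding coordrep_def
  proof (intro conjI allI impI)
    fix al show "x1 al \<in> carrier_mat (d (t al)) (d (s al))"
      unfolding x1_def gl_act_def cm_def cm'_def by (rule mult_carrier_mat[OF mult_carrier_mat[OF dmat_carrier cx] dmat_carrier])
  next
    fix al p p' assume pp: "p \<in> P" "p' \<in> P" "vtx p = s al" "vtx p' = t al"
    have r: "Phi p < d (s al)" "Phi p' < d (t al)" using bijrep_range[OF br] pp by force+
    have "x1 al $$ (Phi p', Phi p) = (1 / e (Pi (t al) (Phi p'))) * x al $$ (Phi p', Phi p) * e (Pi (s al) (Phi p))"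
      unfolding x1_def gl_act_def cm_def cm'_def
      by (simp only: dmat_right[OF mult_carrier_mat[OF dmat_carrier cx] r(2) r(1)] dmat_left[OF cx r(2) r(1)])
    also have "\<dots> = (1 / e p') * cf al p p' * e p"
      using cr pp bijrep_inv[OF br] unfolding coordrep_def Pi_def by auto
    finally show "x1 al $$ (Phi p', Phi p) = cf al p p' * e p / e p'" by simp
  qed
  have cx1: "\<And>al. x1 al \<in> carrier_mat (d (t al)) (d (s al))" using cr1 unfolding coordrep_def by auto
  have one: "\<And>v. cm v * cm' v = 1\<^sub>m (d v)" using glc unfolding is_GL_def by auto
  have "gl_act s t cm cm' x1 = gl_act s t (\<lambda>v. cm v * cm' v) (\<lambda>v. cm v * cm' v) x"
    unfolding x1_def by (rule gl_act_compose[OF glc glc' cx])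
  also have "\<dots> = x" unfolding one gl_act_def
  proof
    fix al show "1\<^sub>m (d (t al)) * x al * 1\<^sub>m (d (s al)) = x al" using cx[of al] by simp
  qed
  finally have xx: "x = gl_act s t cm cm' x1" by simp
  have "gl_act s t g h x = gl_act s t (\<lambda>v. g v * cm v) (\<lambda>v. cm' v * h v) x1"
    unfolding xx by (rule gl_act_compose[OF gl glc cx1])
  moreover have "is_GL d (\<lambda>v. g v * cm v) (\<lambda>v. cm' v * h v)" by (rule is_GL_mult[OF gl glc])
  moreover have "realizes s t d L x1" by (rule real[OF cr1])
  ultimately show ?thesis unfolding module_orbit_def by blast
qed


lemma bij_restrict:
  assumes "bij_betw f A B" "\<forall>a\<in>A. g (f a) = h a"
  shows "bij_betw f {a\<in>A. h a = v} {b\<in>B. g b = v}"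
  using assms unfolding bij_betw_def inj_on_def by (auto simp: image_iff)

lemma hat_coord:
  fixes x0 :: "'a \<Rightarrow> 'k::field mat"
  assumes "realizes s t d L x0" "bij_betw psi P (mbasis L)" "\<forall>p\<in>P. mvert s t L (psi p) = vtx p"
    and "\<forall>al p p'. p \<in> P \<longrightarrow> p' \<in> P \<longrightarrow> vtx p = s al \<longrightarrow> vtx p' = t al \<longrightarrow> mcf s t L al (psi p) (psi p') = cf al p p'"
  shows "\<exists>Phi. bijrep d P vtx Phi \<and> coordrep s t d P vtx Phi x0 cf"
proof -
  from assms(1) obtain phi where c: "\<forall>al. x0 al \<in> carrier_mat (d (t al)) (d (s al))"
    and b: "\<forall>v. bij_betw phi {y \<in> mbasis L. mvert s t L y = v} {..<d v}"
    and e: "\<forall>al y y'. y \<in> mbasis L \<longrightarrow> y' \<in> mbasis L \<longrightarrow> mvert s t L y = s al \<longrightarrow>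
               mvert s t L y' = t al \<longrightarrow> x0 al $$ (phi y', phi y) = mcf s t L al y y'"
    unfolding realizes_def by blast
  have "bijrep d P vtx (phi \<circ> psi)" unfolding bijrep_def
  proof
    fix v
    have "bij_betw psi {p\<in>P. vtx p = v} {y \<in> mbasis L. mvert s t L y = v}"
      by (rule bij_restrict) (use assms(2,3) in auto)
    then show "bij_betw (phi \<circ> psi) {p \<in> P. vtx p = v} {..<d v}" using b bij_betw_trans by blast
  qed
  moreover have "coordrep s t d P vtx (phi \<circ> psi) x0 cf" unfolding coordrep_def
  proof (intro conjI allI impI)
    fix al p p' assume pp: "p \<in> P" "p' \<in> P" "vtx p = s al" "vtx p' = t al"
    have m: "psi p \<in> mbasis L" "psi p' \<in> mbasis L" using assms(2) pp unfolding bij_betw_def by auto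
    have "x0 al $$ (phi (psi p'), phi (psi p)) = mcf s t L al (psi p) (psi p')"
      using e[rule_format, OF m] assms(3) pp by auto
    then show "x0 al $$ ((phi \<circ> psi) p', (phi \<circ> psi) p) = cf al p p'"
      using assms(4) pp by auto
  qed (use c in auto)
  ultimately show ?thesis by blast
qed

lemma realize_from_coord:
  fixes x1 :: "'a \<Rightarrow> 'k::field mat"
  assumes br: "bijrep d P vtx Phi" and cr: "coordrep s t d P vtx Phi x1 cf"
    and bp: "bij_betw pos (mbasis L) P" and mv: "\<forall>y\<in>mbasis L. mvert s t L y = vtx (pos y)"
    and mc: "\<forall>al y y'. y \<in> mbasis L \<longrightarrow> y' \<in> mbasis L \<longrightarrow> mvert s t L y = s al \<longrightarrow> mvert s t L y' = t al
               \<longrightarrow> mcf s t L al y y' = cf al (pos y) (pos y')"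
  shows "realizes s t d L x1"
  unfolding realizes_def
proof (intro conjI exI[of _ "Phi \<circ> pos"] allI impI)
  show "\<And>al. x1 al \<in> carrier_mat (d (t al)) (d (s al))" using cr unfolding coordrep_def by auto
next
  fix v
  have "bij_betw pos {y \<in> mbasis L. mvert s t L y = v} {p\<in>P. vtx p = v}"
    by (rule bij_restrict) (use bp mv in auto)
  then show "bij_betw (Phi \<circ> pos) {y \<in> mbasis L. mvert s t L y = v} {..<d v}"
    using br bij_betw_trans unfolding bijrep_def by blast
next
  fix al y y' assume yy: "y \<in> mbasis L" "y' \<in> mbasis L" "mvert s t L y = s al" "mvert s t L y' = t al"
  have pp: "pos y \<in> P" "pos y' \<in> P" using bp yy unfolding bij_betw_def by auto
  have "mcf s t L al y y' = cf al (pos y) (pos y')" using mc yy by blast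
  moreover have "x1 al $$ (Phi (pos y'), Phi (pos y)) = cf al (pos y) (pos y')"
    using cr pp mv yy unfolding coordrep_def by auto
  ultimately show "x1 al $$ ((Phi \<circ> pos) y', (Phi \<circ> pos) y) = mcf s t L al y y'"
    by simp
qed

lemma cfw_lin: "cfw nx m cs w1 al p p' + lam * cfw nx m cs w2 al p p' = cfw nx m cs (\<lambda>i. w1 i + lam * w2 i) al p p'"
  unfolding cfw_def by (auto simp: algebra_simps)

lemma cfw_cong: "(\<And>i. i < m \<Longrightarrow> w i = w' i) \<Longrightarrow> cfw nx m cs w al p p' = cfw nx m cs w' al p p'"
  unfolding cfw_def by auto

fun isDir :: "'a letter \<Rightarrow> bool" where "isDir (Dir a) = True" | "isDir (Inv a) = False"

lemma cfw_scale:
  "cfw nx m cs w al p p' * e p / e p' =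
   cfw nx m cs (\<lambda>i. w i * (if isDir (cs!i) then e i / e (nx i) else e (nx i) / e i)) al p p'"
  unfolding cfw_def by (auto simp: algebra_simps add_divide_distrib)




lemma family_nil: "family s t d strs [] = module_orbit s t d (map (\<lambda>(v, cs). SP v cs) strs)"
  unfolding family_def by auto

lemma string_rel:
  assumes "is_string s t R (v, cs)" "(al, be) \<in> R"
  shows "cfw Suc (length cs) cs w be p' p'' * cfw Suc (length cs) cs w al p p' = 0"
proof -
  have A: "\<And>i. Suc i < length cs \<Longrightarrow> \<not> (cs!i = Dir al \<and> cs!Suc i = Dir be)"
   and B: "\<And>i. Suc i < length cs \<Longrightarrow> \<not> (cs!i = Inv be \<and> cs!Suc i = Inv al)"
    using assms unfolding is_string_def by auto
  show ?thesis unfolding cfw_def using A B by auto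
qed

lemma mbasis_two: "mbasis [SP v A, SP w B] = {(0, (q, 0)) | q. q \<le> length A} \<union> {(1, (q, 0)) | q. q \<le> length B}"
  apply (rule Set.set_eqI)
  subgoal for x by (cases x) (auto simp: mbasis_def less_Suc_eq)
  done

definition psiS :: "nat \<Rightarrow> nat \<Rightarrow> nat \<times> nat \<times> nat" where
  "psiS k p = (if p < k then (0, (p, 0)) else (1, (p - k, 0)))"


lemma psiS_bij:
  assumes "1 \<le> k" "k \<le> length cs"
  shows "bij_betw (psiS k) {..length cs} (mbasis [SP v (take (k - 1) cs), SP w (drop k cs)])"
  unfolding mbasis_two
  by (rule bij_betw_byWitness[where f'="\<lambda>(i, q, j). if i = 0 then q else q + k"])
     (use assms in \<open>auto simp: psiS_def\<close>)

lemma psiS_vert: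
  assumes "1 \<le> k" "k \<le> length cs" "p \<le> length cs"
  shows "mvert s t [SP v (take (k - 1) cs), SP (ltgt s t (cs!(k - 1))) (drop k cs)] (psiS k p) = pos_vert s t v cs p"
proof (cases "p < k")
  case True
  then show ?thesis using assms by (simp add: psiS_def mvert_def pos_vert_def)
next
  case False
  then show ?thesis using assms by (auto simp: psiS_def mvert_def pos_vert_def Suc_diff_Suc add.commute)
qed

lemma psiS_mcf:
  assumes "1 \<le> k" "k \<le> length cs" "p \<le> length cs" "p' \<le> length cs"
  shows "mcf s t [SP v (take (k - 1) cs), SP w (drop k cs)] al (psiS k p) (psiS k p') =
     (cfw Suc (length cs) cs (\<lambda>i. if i = k - 1 then 0 else 1) al p p' :: 'k::field)"
proof (cases "p < k")
  case True
  note T = this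
  show ?thesis
  proof (cases "p' < k")
    case True
    have "mcf s t [SP v (take (k - 1) cs), SP w (drop k cs)] al (psiS k p) (psiS k p') =
       (cfw Suc (k - 1) (take (k - 1) cs) (\<lambda>_. 1) al p p' :: 'k)"
      using T True assms by (simp add: psiS_def mcf_def pcf_SP del: pcf.simps)
    also have "\<dots> = cfw Suc (length cs) cs (\<lambda>i. if i = k - 1 then 0 else 1) al p p'"
      unfolding cfw_def using T True assms by (intro arg_cong2[where f="(+)"]) (auto simp: nth_take)
    finally show ?thesis .
  next
    case False
    have "mcf s t [SP v (take (k - 1) cs), SP w (drop k cs)] al (psiS k p) (psiS k p') = (0::'k)"
      using T False assms by (simp add: psiS_def mcf_def)
    also have "\<dots> = cfw Suc (length cs) cs (\<lambda>i. if i = k - 1 then 0 else 1) al p p'"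
      unfolding cfw_def using T False assms by auto
    finally show ?thesis .
  qed
next
  case False
  note T = this
  show ?thesis
  proof (cases "p' < k")
    case True
    have "mcf s t [SP v (take (k - 1) cs), SP w (drop k cs)] al (psiS k p) (psiS k p') = (0::'k)"
      using T True assms by (simp add: psiS_def mcf_def)
    also have "\<dots> = cfw Suc (length cs) cs (\<lambda>i. if i = k - 1 then 0 else 1) al p p'"
      unfolding cfw_def using T True assms by auto
    finally show ?thesis .
  next
    case False
    have "mcf s t [SP v (take (k - 1) cs), SP w (drop k cs)] al (psiS k p) (psiS k p') =
       (cfw Suc (length cs - k) (drop k cs) (\<lambda>_. 1) al (p - k) (p' - k) :: 'k)"
      using T False assms by (simp add: psiS_def mcf_def pcf_SP del: pcf.simps)
    also have "\<dots> = cfw Suc (length cs) cs (\<lambda>i. if i = k - 1 then 0 else 1) al p p'"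
      unfolding cfw_def using T False assms by (intro arg_cong2[where f="(+)"]) (auto simp: nth_drop)
    finally show ?thesis .
  qed
qed


lemma mbasis_one: "mbasis [SP v A] = {(0, (q, 0)) | q. q \<le> length A}"
  unfolding mbasis_def by auto

lemma strD_real:
  fixes x1 :: "'a \<Rightarrow> 'k::field mat"
  assumes br: "bijrep d {..length cs} (pos_vert s t v cs) Phi"
    and cr: "coordrep s t d {..length cs} (pos_vert s t v cs) Phi x1 (cfw Suc (length cs) cs (\<lambda>_. 1))"
  shows "realizes s t d [SP v cs] x1"
proof (rule realize_from_coord[OF br cr, where pos="\<lambda>(i, p, j). p"])
  show "bij_betw (\<lambda>(i, p, j). p) (mbasis [SP v cs]) {..length cs}"
    unfolding mbasis_one by (rule bij_betw_byWitness[where f'="\<lambda>p. (0, p, 0)"]) auto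
  show "\<forall>y\<in>mbasis [SP v cs]. mvert s t [SP v cs] y = pos_vert s t v cs (case y of (i, p, j) \<Rightarrow> p)"
    unfolding mbasis_one by (auto simp: mvert_def)
  show "\<forall>al y y'. y \<in> mbasis [SP v cs] \<longrightarrow> y' \<in> mbasis [SP v cs] \<longrightarrow> mvert s t [SP v cs] y = s al \<longrightarrow>
      mvert s t [SP v cs] y' = t al \<longrightarrow> mcf s t [SP v cs] al y y' =
      cfw Suc (length cs) cs (\<lambda>_. 1) al (case y of (i, p, j) \<Rightarrow> p) (case y' of (i, p, j) \<Rightarrow> p)"
    unfolding mbasis_one by (auto simp: mcf_def pcf_SP simp del: pcf.simps)
qed



lemma string_case:
  fixes y :: "'a::finite \<Rightarrow> 'k::field mat" and s t :: "'a \<Rightarrow> 'v::finite"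
  assumes inf: "infinite (UNIV :: 'k set)" and gent: "gentle s t R" and str: "is_string s t R (v, cs)"
    and k: "1 \<le> k" "k \<le> length cs"
    and y: "y \<in> module_orbit s t d [SP v (take (k - 1) cs), SP (ltgt s t (cs!(k - 1))) (drop k cs)]"
  shows "y \<in> zariski_closure s t R d (module_orbit s t d [SP v cs])"
proof -
  define L :: "('v, 'a, 'k) piece list" where "L = [SP v (take (k - 1) cs), SP (ltgt s t (cs!(k - 1))) (drop k cs)]"
  define m where "m = length cs"
  define vtx where "vtx = pos_vert s t v cs"
  obtain g h x0 where gl: "is_GL d g h" and re: "realizes s t d L (x0 :: 'a \<Rightarrow> 'k mat)" and yd: "y = gl_act s t g h x0"
    using y unfolding module_orbit_def L_def by blast
  define wc where "wc i = (if i = k - 1 then 0 else (1::'k))" for i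
  define w1 where "w1 i = (if i = k - 1 then 1 else (0::'k))" for i
  obtain Phi where br: "bijrep d {..m} vtx Phi" and cr0: "coordrep s t d {..m} vtx Phi x0 (cfw Suc m cs wc)"
  proof -
    have "\<exists>Phi. bijrep d {..m} vtx Phi \<and> coordrep s t d {..m} vtx Phi x0 (cfw Suc m cs wc)"
    proof (rule hat_coord[OF re])
      show "bij_betw (psiS k) {..m} (mbasis L)" unfolding L_def m_def by (rule psiS_bij[OF k])
      show "\<forall>p\<in>{..m}. mvert s t L (psiS k p) = vtx p"
        unfolding L_def m_def vtx_def using psiS_vert[OF k] by auto
      show "\<forall>al p p'. p \<in> {..m} \<longrightarrow> p' \<in> {..m} \<longrightarrow> vtx p = s al \<longrightarrow> vtx p' = t al \<longrightarrow>
          mcf s t L al (psiS k p) (psiS k p') = cfw Suc m cs wc al p p'"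
        unfolding L_def m_def wc_def using psiS_mcf[OF k] by auto
    qed
    then show ?thesis using that by blast
  qed
  have cx0: "\<And>al. x0 al \<in> carrier_mat (d (t al)) (d (s al))" using cr0 unfolding coordrep_def by auto
  have gc: "\<And>v. g v \<in> carrier_mat (d v) (d v)" "\<And>v. h v \<in> carrier_mat (d v) (d v)"
    using gl unfolding is_GL_def by auto
  have st: "\<And>al be. (al, be) \<in> R \<Longrightarrow> t al = s be" using gent unfolding gentle_def by auto
  have mv: "y \<in> modvar s t R d" unfolding modvar_def
  proof (intro CollectI conjI allI ballI)
    fix al show "y al \<in> carrier_mat (d (t al)) (d (s al))"
      unfolding yd gl_act_def by (rule mult_carrier_mat[OF mult_carrier_mat[OF gc(1) cx0] gc(2)])
  next
    fix r assume r: "r \<in> R"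
    obtain al be where [simp]: "r = (al, be)" by (cases r)
    have ab: "(al, be) \<in> R" using r by simp
    have "x0 be * x0 al = 0\<^sub>m (d (t be)) (d (s al))"
      by (rule relations_hold[OF br cr0 st[OF ab]]) (rule string_rel[OF str ab, folded m_def])
    then show "case r of (al, be) \<Rightarrow> y be * y al = 0\<^sub>m (d (t be)) (d (s al))"
      unfolding yd using gl_rel[OF gl cx0 cx0 st[OF ab]] by simp
  qed
  have cl: "f y = 0" if f: "f \<in> polyfun s t d" and van: "\<forall>z\<in>module_orbit s t d [SP v cs]. f z = 0" for f
    unfolding yd
  proof (rule degen_core[where ?cf1.0 = "cfw Suc m cs w1", OF br cr0 gl inf f van])
    fix lam :: 'k and x assume lam: "lam \<noteq> 0"
      and crx: "coordrep s t d {..m} vtx Phi x (\<lambda>al p p'. cfw Suc m cs wc al p p' + lam * cfw Suc m cs w1 al p p')"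
    define wl where "wl i = wc i + lam * w1 i" for i
    have crl: "coordrep s t d {..m} vtx Phi x (cfw Suc m cs wl)"
      using crx unfolding cfw_lin wl_def .
    define rho where "rho = (if isDir (cs!(k - 1)) then lam else 1 / lam)"
    have rho: "rho \<noteq> 0" using lam unfolding rho_def by auto
    define e where "e p = (if k \<le> p then rho else 1)" for p
    show "gl_act s t g h x \<in> module_orbit s t d [SP v cs]"
    proof (rule scale_to_orbit[OF br crl _ gl])
      show "\<forall>p\<in>{..m}. e p \<noteq> 0" using rho unfolding e_def by auto
      fix x1 assume cr1: "coordrep s t d {..m} vtx Phi x1 (\<lambda>al p p'. cfw Suc m cs wl al p p' * e p / e p')"
      have wq: "wl i * (if isDir (cs!i) then e i / e (Suc i) else e (Suc i) / e i) = 1" if "i < m" for i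
      proof (cases "i = k - 1")
        case True
        then show ?thesis using k lam rho unfolding wl_def wc_def w1_def e_def rho_def by auto
      next
        case False
        then have "e i = e (Suc i)" unfolding e_def using k by auto
        then show ?thesis using False rho unfolding wl_def wc_def w1_def by (auto simp: e_def)
      qed
      have c1: "coordrep s t d {..m} vtx Phi x1 (cfw Suc m cs (\<lambda>_. 1))"
      proof -
        have "cfw Suc m cs (\<lambda>i. wl i * (if isDir (cs!i) then e i / e (Suc i) else e (Suc i) / e i)) = cfw Suc m cs (\<lambda>_. 1)"
          by (intro ext cfw_cong wq)
        then show ?thesis using cr1 unfolding cfw_scale by simp
      qed
      show "realizes s t d [SP v cs] x1"
        by (rule strD_real[OF br[unfolded m_def vtx_def] c1[unfolded m_def vtx_def]])
    qed
  qed
  show ?thesis unfolding zariski_closure_def using mv cl by blast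
qed



lemma nxB_eq: "i < m \<Longrightarrow> Suc i mod m = (if Suc i = m then 0 else Suc i)"
proof (cases "Suc i = m")
  case False
  moreover assume "i < m"
  ultimately have "Suc i < m" by simp
  then show ?thesis by simp
qed simp

lemma band_props:
  assumes "is_band s t R cs"
  shows "cs \<noteq> []"
    and "\<And>i. i < length cs \<Longrightarrow> ltgt s t (cs!i) = lsrc s t (cs!(Suc i mod length cs))"
    and "\<And>i. i < length cs \<Longrightarrow> (al, be) \<in> R \<Longrightarrow> \<not> (cs!i = Dir al \<and> cs!(Suc i mod length cs) = Dir be)"
    and "\<And>i. i < length cs \<Longrightarrow> (al, be) \<in> R \<Longrightarrow> \<not> (cs!i = Inv be \<and> cs!(Suc i mod length cs) = Inv al)"
proof -
  have ne: "cs \<noteq> []" and lh: "ltgt s t (last cs) = lsrc s t (hd cs)"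
    and str0: "is_string s t R (lsrc s t (hd cs), concat (replicate 2 cs))"
    using assms unfolding is_band_def by auto
  have "concat (replicate 2 cs) = cs @ cs" by (simp add: numeral_2_eq_2)
  with str0 have str: "is_string s t R (lsrc s t (hd cs), cs @ cs)" by simp
  have S1: "\<And>i. Suc i < length (cs @ cs) \<Longrightarrow> ltgt s t ((cs @ cs)!i) = lsrc s t ((cs @ cs)!Suc i)"
    and S2: "\<And>i al be. Suc i < length (cs @ cs) \<Longrightarrow> ((cs @ cs)!i = Dir al \<and> (cs @ cs)!Suc i = Dir be) \<or>
        ((cs @ cs)!i = Inv be \<and> (cs @ cs)!Suc i = Inv al) \<Longrightarrow> (al, be) \<notin> R"
    using str unfolding is_string_def by auto
  show "cs \<noteq> []" by (rule ne)
  have nth2: "(cs @ cs) ! i = cs ! i" "(cs @ cs) ! Suc i = cs ! (Suc i mod length cs)" if "i < length cs" for i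
    using that by (auto simp: nth_append nxB_eq)
  have si: "Suc i < length (cs @ cs)" if "i < length cs" for i using that by simp
  fix i assume i: "i < length cs"
  show "ltgt s t (cs!i) = lsrc s t (cs!(Suc i mod length cs))"
    using S1[OF si[OF i]] unfolding nth2[OF i] .
  show "(al, be) \<in> R \<Longrightarrow> \<not> (cs!i = Dir al \<and> cs!(Suc i mod length cs) = Dir be)"
    using S2[OF si[OF i], of al be] unfolding nth2[OF i] by blast
  show "(al, be) \<in> R \<Longrightarrow> \<not> (cs!i = Inv be \<and> cs!(Suc i mod length cs) = Inv al)"
    using S2[OF si[OF i], of al be] unfolding nth2[OF i] by blast
qed


lemma band_rel:
  assumes "is_band s t R cs" "(al, be) \<in> R"
  shows "cfw (\<lambda>i. Suc i mod length cs) (length cs) cs w be p' p'' * cfw (\<lambda>i. Suc i mod length cs) (length cs) cs w al p p' = 0"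
proof -
  note bp = band_props[OF assms(1)]
  define m where "m = length cs"
  define nx where "nx i = Suc i mod m" for i
  have inj: "p = p''" if "p < m" "p'' < m" "nx p = nx p''" for p p''
    using that unfolding nx_def by (auto simp: nxB_eq split: if_splits)
  have c1: "\<not> (p < m \<and> p' = nx p \<and> cs!p = Dir al \<and> p' < m \<and> p'' = nx p' \<and> cs!p' = Dir be)"
    using bp(3)[of p al be] assms(2) unfolding nx_def m_def by auto
  have c2: "\<not> (p < m \<and> p' = nx p \<and> cs!p = Dir al \<and> p'' < m \<and> p' = nx p'' \<and> cs!p'' = Inv be)"
    using inj[of p p''] by force
  have c3: "\<not> (p' < m \<and> p = nx p' \<and> cs!p' = Inv al \<and> p' < m \<and> p'' = nx p' \<and> cs!p' = Dir be)"
    by auto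
  have c4: "\<not> (p' < m \<and> p = nx p' \<and> cs!p' = Inv al \<and> p'' < m \<and> p' = nx p'' \<and> cs!p'' = Inv be)"
    using bp(4)[of p'' al be] assms(2) unfolding nx_def m_def by auto
  have "cfw nx m cs w al p p' = 0 \<or> cfw nx m cs w be p' p'' = 0"
  proof (cases "p < m \<and> p' = nx p \<and> cs!p = Dir al \<or> p' < m \<and> p = nx p' \<and> cs!p' = Inv al")
    case True
    then have n1: "\<not> (p' < m \<and> p'' = nx p' \<and> cs!p' = Dir be)" and n2: "\<not> (p'' < m \<and> p' = nx p'' \<and> cs!p'' = Inv be)"
      using c1 c2 c3 c4 by blast+
    have "cfw nx m cs w be p' p'' = 0" unfolding cfw_def by (simp only: if_not_P[OF n1] if_not_P[OF n2] add_0)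
    then show ?thesis ..
  next
    case False
    then have n1: "\<not> (p < m \<and> p' = nx p \<and> cs!p = Dir al)" and n2: "\<not> (p' < m \<and> p = nx p' \<and> cs!p' = Inv al)"
      by blast+
    have "cfw nx m cs w al p p' = 0" unfolding cfw_def by (simp only: if_not_P[OF n1] if_not_P[OF n2] add_0)
    then show ?thesis ..
  qed
  then have "cfw nx m cs w be p' p'' * cfw nx m cs w al p p' = 0" by auto
  then show ?thesis unfolding nx_def m_def .
qed


lemma cfw_nx_cong: "(\<And>i. i < m \<Longrightarrow> nx i = nx' i) \<Longrightarrow> cfw nx m cs w al p p' = cfw nx' m cs w al p p'"
  unfolding cfw_def by auto

lemma reindex_cfw:
  assumes r1: "\<And>p. p < m \<Longrightarrow> rho p < m"
    and r2: "\<And>p q. p < m \<Longrightarrow> q < m \<Longrightarrow> rho p = rho q \<Longrightarrow> p = q"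
    and r3: "rho c = m - 1" and cm: "c < m"
    and r0: "\<And>p. p < m \<Longrightarrow> nx p < m"
    and r4: "\<And>p. p < m \<Longrightarrow> p \<noteq> c \<Longrightarrow> rho (nx p) = Suc (rho p)"
    and r5: "\<And>p. p < m \<Longrightarrow> p \<noteq> c \<Longrightarrow> hs ! (rho p) = cs ! p"
    and pp: "p < m" "p' < m"
  shows "cfw Suc (m - 1) hs (\<lambda>_. 1) al (rho p) (rho p') = (cfw nx m cs (\<lambda>i. if i = c then 0 else 1) al p p' :: 'k::field)"
proof -
  have lt: "rho q < m - 1 \<longleftrightarrow> q \<noteq> c" if "q < m" for q
  proof
    assume "rho q < m - 1" then show "q \<noteq> c" using r3 by auto
  next
    assume "q \<noteq> c"
    then have "rho q \<noteq> rho c" using r2 that cm by blast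
    then show "rho q < m - 1" using r1[OF that] r3 by auto
  qed
  have D: "(if rho p < m - 1 \<and> rho p' = Suc (rho p) \<and> hs ! rho p = Dir al then 1 else 0) =
    (if p < m \<and> p' = nx p \<and> cs ! p = Dir al then if p = c then 0 else 1 else (0::'k))"
  proof (cases "p = c")
    case True then show ?thesis using lt[OF pp(1)] by auto
  next
    case False
    have "rho p' = Suc (rho p) \<longleftrightarrow> p' = nx p"
      using r4[OF pp(1) False] r2[OF pp(2) r0[OF pp(1)]] by auto
    then show ?thesis using False lt[OF pp(1)] r5[OF pp(1) False] pp by auto
  qed
  have I: "(if rho p' < m - 1 \<and> rho p = Suc (rho p') \<and> hs ! rho p' = Inv al then 1 else 0) =
    (if p' < m \<and> p = nx p' \<and> cs ! p' = Inv al then if p' = c then 0 else 1 else (0::'k))"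
  proof (cases "p' = c")
    case True then show ?thesis using lt[OF pp(2)] by auto
  next
    case False
    have "rho p = Suc (rho p') \<longleftrightarrow> p = nx p'"
      using r4[OF pp(2) False] r2[OF pp(1) r0[OF pp(2)]] by auto
    then show ?thesis using False lt[OF pp(2)] r5[OF pp(2) False] pp by auto
  qed
  show ?thesis unfolding cfw_def using D I by simp
qed


definition rhoB :: "nat \<Rightarrow> nat \<Rightarrow> nat \<Rightarrow> nat" where
  "rhoB k m p = (if k \<le> p then p - k else p + m - k)"

definition nxB :: "nat \<Rightarrow> nat \<Rightarrow> nat" where
  "nxB m i = (if Suc i = m then 0 else Suc i)"

lemma rhoB_facts:
  assumes k: "1 \<le> k" "k \<le> length cs"
  defines "m \<equiv> length cs" and "hs \<equiv> drop k cs @ take (k - 1) cs"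
  shows "\<And>p. p < m \<Longrightarrow> rhoB k m p < m"
    and "\<And>p q. p < m \<Longrightarrow> q < m \<Longrightarrow> rhoB k m p = rhoB k m q \<Longrightarrow> p = q"
    and "rhoB k m (k - 1) = m - 1" and "k - 1 < m"
    and "\<And>p. p < m \<Longrightarrow> nxB m p < m"
    and "\<And>p. p < m \<Longrightarrow> p \<noteq> k - 1 \<Longrightarrow> rhoB k m (nxB m p) = Suc (rhoB k m p)"
    and "\<And>p. p < m \<Longrightarrow> p \<noteq> k - 1 \<Longrightarrow> hs ! (rhoB k m p) = cs ! p"
    and "length hs = m - 1"
  using k unfolding rhoB_def nxB_def m_def hs_def
  by (auto simp: nth_append split: if_splits)


lemma psiB_bij:
  assumes k: "1 \<le> k" "k \<le> length cs"
  shows "bij_betw (\<lambda>p. (0, rhoB k (length cs) p, 0)) {..<length cs} (mbasis [SP w (drop k cs @ take (k - 1) cs)])"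
  unfolding mbasis_one
  by (rule bij_betw_byWitness[where f'="\<lambda>(i, q, j). if q < length cs - k then q + k else q + k - length cs"])
     (use k in \<open>auto simp: rhoB_def\<close>)

lemma psiB_vert:
  assumes k: "1 \<le> k" "k \<le> length cs" and band: "is_band s t R cs" and p: "p < length cs"
  shows "mvert s t [SP (ltgt s t (cs!(k - 1))) (drop k cs @ take (k - 1) cs)] (0, rhoB k (length cs) p, 0) = lsrc s t (cs!p)"
proof -
  define m where "m = length cs"
  define hs where "hs = drop k cs @ take (k - 1) cs"
  note rf = rhoB_facts[OF k, folded m_def hs_def]
  have conn: "ltgt s t (cs!i) = lsrc s t (cs!(nxB m i))" if "i < m" for i
    using band_props(2)[OF band, of i] that nxB_eq[of i m] unfolding m_def nxB_def by simp
  have "mvert s t [SP (ltgt s t (cs!(k - 1))) hs] (0, rhoB k m p, 0) = pos_vert s t (ltgt s t (cs!(k - 1))) hs (rhoB k m p)"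
    by (simp add: mvert_def)
  also have "\<dots> = lsrc s t (cs!p)"
  proof (cases "p = nxB m (k - 1)")
    case True
    then have "rhoB k m p = 0" using k unfolding m_def rhoB_def nxB_def by auto
    then show ?thesis using True conn[OF rf(4)] by (simp add: pos_vert_def)
  next
    case False
    define p0 where "p0 = (if p = 0 then m - 1 else p - 1)"
    have p0: "p0 < m" "nxB m p0 = p" using p unfolding p0_def m_def nxB_def by auto
    have p0c: "p0 \<noteq> k - 1" using False p0 by auto
    have r: "rhoB k m p = Suc (rhoB k m p0)" using rf(6)[OF p0(1) p0c] p0 by simp
    have "hs ! rhoB k m p0 = cs ! p0" by (rule rf(7)[OF p0(1) p0c])
    then show ?thesis using r conn[OF p0(1)] p0 by (simp add: pos_vert_def)
  qed
  finally show ?thesis unfolding m_def hs_def .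
qed

lemma psiB_mcf:
  assumes k: "1 \<le> k" "k \<le> length cs" and pp: "p < length cs" "p' < length cs"
  shows "mcf s t [SP w (drop k cs @ take (k - 1) cs)] al (0, rhoB k (length cs) p, 0) (0, rhoB k (length cs) p', 0) =
     (cfw (\<lambda>i. Suc i mod length cs) (length cs) cs (\<lambda>i. if i = k - 1 then 0 else 1) al p p' :: 'k::field)"
proof -
  define m where "m = length cs"
  define hs where "hs = drop k cs @ take (k - 1) cs"
  note rf = rhoB_facts[OF k, folded m_def hs_def]
  have "mcf s t [SP w hs] al (0, rhoB k m p, 0) (0, rhoB k m p', 0) = (cfw Suc (m - 1) hs (\<lambda>_. 1) al (rhoB k m p) (rhoB k m p') :: 'k)"
    by (simp add: mcf_def pcf_SP rf(8) del: pcf.simps)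
  also have "\<dots> = cfw (nxB m) m cs (\<lambda>i. if i = k - 1 then 0 else 1) al p p'"
    by (rule reindex_cfw[OF rf(1,2,3,4,5,6,7)]) (use pp in \<open>auto simp: m_def\<close>)
  also have "\<dots> = cfw (\<lambda>i. Suc i mod m) m cs (\<lambda>i. if i = k - 1 then 0 else 1) al p p'"
    by (rule cfw_nx_cong) (simp add: nxB_def nxB_eq)
  finally show ?thesis unfolding m_def hs_def .
qed

lemma bandD_real:
  fixes x1 :: "'a \<Rightarrow> 'k::field mat"
  assumes br: "bijrep d {..<length cs} (\<lambda>p. lsrc s t (cs!p)) Phi"
    and cr: "coordrep s t d {..<length cs} (\<lambda>p. lsrc s t (cs!p)) Phi x1
               (cfw (\<lambda>i. Suc i mod length cs) (length cs) cs (\<lambda>i. if i = 0 then mu else 1))"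
  shows "realizes s t d [BP cs mu 1] x1"
proof (rule realize_from_coord[OF br cr, where pos="\<lambda>(i, p, j). p"])
  have mb: "mbasis [BP cs mu 1] = {(0, (p, 0)) | p. p < length cs}" unfolding mbasis_def by auto
  show "bij_betw (\<lambda>(i, p, j). p) (mbasis [BP cs mu 1]) {..<length cs}"
    unfolding mb by (rule bij_betw_byWitness[where f'="\<lambda>p. (0, p, 0)"]) auto
  show "\<forall>y\<in>mbasis [BP cs mu 1]. mvert s t [BP cs mu 1] y = lsrc s t (cs ! (case y of (i, p, j) \<Rightarrow> p))"
    unfolding mb by (auto simp: mvert_def)
  show "\<forall>al y y'. y \<in> mbasis [BP cs mu 1] \<longrightarrow> y' \<in> mbasis [BP cs mu 1] \<longrightarrow> mvert s t [BP cs mu 1] y = s al \<longrightarrow>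
      mvert s t [BP cs mu 1] y' = t al \<longrightarrow> mcf s t [BP cs mu 1] al y y' =
      cfw (\<lambda>i. Suc i mod length cs) (length cs) cs (\<lambda>i. if i = 0 then mu else 1) al (case y of (i, p, j) \<Rightarrow> p) (case y' of (i, p, j) \<Rightarrow> p)"
    unfolding mb by (auto simp: mcf_def pcf_BP pcf_BP[unfolded One_nat_def] simp del: pcf.simps)
qed

lemma band_family:
  assumes "mu \<noteq> 0"
  shows "module_orbit s t d [BP cs mu 1] \<subseteq> sb_family s t d (Band cs)"
proof
  fix y assume y: "y \<in> module_orbit s t d [BP cs mu 1]"
  show "y \<in> sb_family s t d (Band cs)"
    unfolding sb_family.simps family_def
    by (rule CollectI, rule exI[of _ "[[(mu, 1)]]"]) (use y assms in auto)
qed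


lemma band_case:
  fixes y :: "'a::finite \<Rightarrow> 'k::field mat" and s t :: "'a \<Rightarrow> 'v::finite"
  assumes inf: "infinite (UNIV :: 'k set)" and gent: "gentle s t R" and band: "is_band s t R cs"
    and k: "1 \<le> k" "k \<le> length cs"
    and y: "y \<in> module_orbit s t d [SP (ltgt s t (cs!(k - 1))) (drop k cs @ take (k - 1) cs)]"
  shows "y \<in> zariski_closure s t R d (sb_family s t d (Band cs))"
proof -
  define L :: "('v, 'a, 'k) piece list" where "L = [SP (ltgt s t (cs!(k - 1))) (drop k cs @ take (k - 1) cs)]"
  define m where "m = length cs"
  define vtx where "vtx p = lsrc s t (cs!p)" for p
  define nx where "nx i = Suc i mod m" for i
  obtain g h x0 where gl: "is_GL d g h" and re: "realizes s t d L (x0 :: 'a \<Rightarrow> 'k mat)" and yd: "y = gl_act s t g h x0"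
    using y unfolding module_orbit_def L_def by blast
  define wc where "wc i = (if i = k - 1 then 0 else (1::'k))" for i
  define w1 where "w1 i = (if i = k - 1 then 1 else (0::'k))" for i
  obtain Phi where br: "bijrep d {..<m} vtx Phi" and cr0: "coordrep s t d {..<m} vtx Phi x0 (cfw nx m cs wc)"
  proof -
    have "\<exists>Phi. bijrep d {..<m} vtx Phi \<and> coordrep s t d {..<m} vtx Phi x0 (cfw nx m cs wc)"
    proof (rule hat_coord[OF re])
      show "bij_betw (\<lambda>p. (0, rhoB k m p, 0)) {..<m} (mbasis L)" unfolding L_def m_def by (rule psiB_bij[OF k])
      show "\<forall>p\<in>{..<m}. mvert s t L (0, rhoB k m p, 0) = vtx p"
        unfolding L_def m_def vtx_def using psiB_vert[OF k band] by auto
      show "\<forall>al p p'. p \<in> {..<m} \<longrightarrow> p' \<in> {..<m} \<longrightarrow> vtx p = s al \<longrightarrow> vtx p' = t al \<longrightarrow>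
          mcf s t L al (0, rhoB k m p, 0) (0, rhoB k m p', 0) = cfw nx m cs wc al p p'"
        unfolding L_def m_def wc_def nx_def using psiB_mcf[OF k] by auto
    qed
    then show ?thesis using that by blast
  qed
  have cx0: "\<And>al. x0 al \<in> carrier_mat (d (t al)) (d (s al))" using cr0 unfolding coordrep_def by auto
  have gc: "\<And>v. g v \<in> carrier_mat (d v) (d v)" "\<And>v. h v \<in> carrier_mat (d v) (d v)"
    using gl unfolding is_GL_def by auto
  have st: "\<And>al be. (al, be) \<in> R \<Longrightarrow> t al = s be" using gent unfolding gentle_def by auto
  have mv: "y \<in> modvar s t R d" unfolding modvar_def
  proof (intro CollectI conjI allI ballI)
    fix al show "y al \<in> carrier_mat (d (t al)) (d (s al))"
      unfolding yd gl_act_def by (rule mult_carrier_mat[OF mult_carrier_mat[OF gc(1) cx0] gc(2)])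
  next
    fix r assume r: "r \<in> R"
    obtain al be where [simp]: "r = (al, be)" by (cases r)
    have ab: "(al, be) \<in> R" using r by simp
    have "x0 be * x0 al = 0\<^sub>m (d (t be)) (d (s al))"
      by (rule relations_hold[OF br cr0 st[OF ab]]) (rule band_rel[OF band ab, folded m_def, folded nx_def])
    then show "case r of (al, be) \<Rightarrow> y be * y al = 0\<^sub>m (d (t be)) (d (s al))"
      unfolding yd using gl_rel[OF gl cx0 cx0 st[OF ab]] by simp
  qed
  have cl: "f y = 0" if f: "f \<in> polyfun s t d" and van: "\<forall>z\<in>sb_family s t d (Band cs). f z = 0" for f
    unfolding yd
  proof (rule degen_core[where ?cf1.0 = "cfw nx m cs w1", OF br cr0 gl inf f van])
    fix lam :: 'k and x assume lam: "lam \<noteq> 0"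
      and crx: "coordrep s t d {..<m} vtx Phi x (\<lambda>al p p'. cfw nx m cs wc al p p' + lam * cfw nx m cs w1 al p p')"
    define wl where "wl i = wc i + lam * w1 i" for i
    have crl: "coordrep s t d {..<m} vtx Phi x (cfw nx m cs wl)"
      using crx unfolding cfw_lin wl_def .
    define rho where "rho = (if isDir (cs!(k - 1)) then 1 / lam else lam)"
    have rho: "rho \<noteq> 0" using lam unfolding rho_def by auto
    define e where "e p = (if 1 \<le> p \<and> p \<le> k - 1 then rho else 1)" for p
    have e0: "e p \<noteq> 0" for p using rho unfolding e_def by auto
    define w' where "w' i = wl i * (if isDir (cs!i) then e i / e (nx i) else e (nx i) / e i)" for i
    have w'1: "w' i = 1" if "0 < i" "i < m" for i
    proof -
      have nxi: "nx i = (if Suc i = m then 0 else Suc i)" unfolding nx_def using nxB_eq that(2) .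
      show ?thesis
    proof (cases "i = k - 1")
      case True
      have "e i = rho" using True that k unfolding e_def by auto
      moreover have "e (nx i) = 1" using True that k unfolding e_def nxi by auto
      moreover have "wl i = lam" using True unfolding wl_def wc_def w1_def by simp
      ultimately show ?thesis using True lam unfolding w'_def rho_def by auto
    next
      case False
      have "e i = e (nx i)" using False that k unfolding e_def nxi m_def by auto
      moreover have "wl i = 1" using False unfolding wl_def wc_def w1_def by simp
      ultimately show ?thesis using e0 unfolding w'_def by auto
    qed
    qed
    have w'0: "w' 0 \<noteq> 0"
    proof -
      have "wl 0 \<noteq> 0" using lam unfolding wl_def wc_def w1_def by auto
      then show ?thesis unfolding w'_def using e0 by auto
    qed
    have "gl_act s t g h x \<in> module_orbit s t d [BP cs (w' 0) 1]"
    proof (rule scale_to_orbit[OF br crl _ gl])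
      show "\<forall>p\<in>{..<m}. e p \<noteq> 0" using e0 by auto
      fix x1 assume cr1: "coordrep s t d {..<m} vtx Phi x1 (\<lambda>al p p'. cfw nx m cs wl al p p' * e p / e p')"
      have c1: "coordrep s t d {..<m} vtx Phi x1 (cfw nx m cs (\<lambda>i. if i = 0 then w' 0 else 1))"
      proof -
        have "cfw nx m cs w' = cfw nx m cs (\<lambda>i. if i = 0 then w' 0 else 1)"
          by (intro ext cfw_cong) (use w'1 in auto)
        then show ?thesis using cr1 unfolding cfw_scale w'_def by simp
      qed
      show "realizes s t d [BP cs (w' 0) 1] x1"
        by (rule bandD_real[OF br[unfolded m_def vtx_def] c1[unfolded m_def vtx_def nx_def]])
    qed
    then show "gl_act s t g h x \<in> sb_family s t d (Band cs)" using band_family[OF w'0] by blast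
  qed
  show ?thesis unfolding zariski_closure_def using mv cl by blast
qed


theorem mainTheorem5:
  fixes s t :: "'a::finite \<Rightarrow> 'v::finite"
    and R :: "('a \<times> 'a) set"
    and D :: "('v, 'a) strband"
    and k :: nat
  assumes "alg_closed TYPE('k::field)"
    and "gentle s t R"
    and "fin_dim_alg s t R"
    and "is_strband s t R D"
    and "1 \<le> k" and "k \<le> sb_len D"
  shows "(family s t (sb_dimvec s t D) (sb_hat s t D k) [] :: ('a \<Rightarrow> 'k mat) set)
           \<subseteq> zariski_closure s t R (sb_dimvec s t D) (sb_family s t (sb_dimvec s t D) D)"
proof
  have inf: "infinite (UNIV :: 'k set)" by (rule alg_closed_infinite[OF assms(1)])
  fix y :: "'a \<Rightarrow> 'k mat"
  assume y: "y \<in> family s t (sb_dimvec s t D) (sb_hat s t D k) []"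
  show "y \<in> zariski_closure s t R (sb_dimvec s t D) (sb_family s t (sb_dimvec s t D) D)"
  proof (cases D)
    case (Str v cs)
    have "y \<in> module_orbit s t (sb_dimvec s t D) [SP v (take (k - 1) cs), SP (ltgt s t (cs!(k - 1))) (drop k cs)]"
      using y unfolding Str family_nil by simp
    from string_case[OF inf assms(2) _ _ _ this] assms(4,5,6)
    have "y \<in> zariski_closure s t R (sb_dimvec s t D) (module_orbit s t (sb_dimvec s t D) [SP v cs])"
      unfolding Str by simp
    then show ?thesis unfolding Str sb_family.simps family_nil by simp
  next
    case (Band cs)
    have "y \<in> module_orbit s t (sb_dimvec s t D) [SP (ltgt s t (cs!(k - 1))) (drop k cs @ take (k - 1) cs)]"
      using y unfolding Band family_nil by simp
    from band_case[OF inf assms(2) _ _ _ this] assms(4,5,6)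
    show ?thesis unfolding Band by simp
  qed
qed

end
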